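(* For every integer $n\ge 5$, $$\operatorname{str}(Q_n)\le \operatorname{str}_{f_{n-2}}(Q_{n-2})+3\cdot 2^{n-2}+\binom{n-3}{\lceil (n-3)/2\rceil}+\binom{n-2}{\lceil (n-2)/2\rceil}.$$
   Context: $Q_n$ is the $n$-dimensional hypercube: vertices are the $n$-bit strings, adjacent iff they differ in exactly one position. For a bijection $f:V(G)\to\{1,\dots,|V(G)|\}$ (a vertex ordering), $\operatorname{str}_f(G)=\max\{f(u)+f(v):uv\in E(G)\}$, and the strength $\operatorname{str}(G)$ is the minimum of $\operatorname{str}_f(G)$ over all such bijections $f$. An $n$-bit string is $x_1\cdots x_n$, $x_i\in\{0,1\}$; its weight is its number of $1$s. Lexicographic order: $x<y$ if for some $k$, $x_j=y_j$ for $j<k$ and $x_k<y_k$. $S_n^i$ is the sequence of $n$-bit strings of weight $i$ in increasing lexicographic order; $R_n^i$ is the same set in decreasing lexicographic order. $S_n$ is the concatenation $(R_n^1,R_n^3,\dots,R_n^{n-1},S_n^n,S_n^{n-2},\dots,S_n^2,S_n^0)$ for even $n$ and $(R_n^1,R_n^3,\dots,R_n^{n-2},R_n^n,S_n^{n-1},\dots,S_n^2,S_n^0)$ for odd $n$; $f_n$ maps the string in position $j$ of $S_n$ to $j$. *)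

theory Defs
  imports Complex_Main "HOL-Library.List_Lexorder"
begin

definition str_of :: "('a \<Rightarrow> nat) \<Rightarrow> 'a set \<Rightarrow> ('a \<Rightarrow> 'a \<Rightarrow> bool) \<Rightarrow> nat" where
  "str_of f V E = Max {f u + f v | u v. u \<in> V \<and> v \<in> V \<and> E u v}"

definition strength :: "'a set \<Rightarrow> ('a \<Rightarrow> 'a \<Rightarrow> bool) \<Rightarrow> nat" where
  "strength V E = Min {str_of f V E | f. bij_betw f V {1..card V}}"

text \<open>Vertices: n-bit strings, as boolean lists of length n (False = 0, True = 1).\<close>

definition Qv :: "nat \<Rightarrow> bool list set" where
  "Qv n = {x. length x = n}"

definition Qadj :: "nat \<Rightarrow> bool list \<Rightarrow> bool list \<Rightarrow> bool" where
  "Qadj n x y \<longleftrightarrow> card {i. i < n \<and> x ! i \<noteq> y ! i} = 1"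

definition weight :: "bool list \<Rightarrow> nat" where
  "weight x = length (filter id x)"

text \<open>On bool lists of equal length, the order from List_Lexorder is the
  lexicographic order with False < True.\<close>

definition Sseq :: "nat \<Rightarrow> nat \<Rightarrow> bool list list" where
  "Sseq n i = sorted_list_of_set {x. length x = n \<and> weight x = i}"

definition Rseq :: "nat \<Rightarrow> nat \<Rightarrow> bool list list" where
  "Rseq n i = rev (Sseq n i)"

text \<open>S_n: R_n^i for odd i in increasing order, followed by S_n^i for even i
  in decreasing order (this covers both the even and the odd case).\<close>

definition Sn :: "nat \<Rightarrow> bool list list" where
  "Sn n = concat (map (Rseq n) (filter odd [0..<Suc n]))
        @ concat (map (Sseq n) (rev (filter even [0..<Suc n])))"

definition fn :: "nat \<Rightarrow> bool list \<Rightarrow> nat" where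
  "fn n x = (THE j. 1 \<le> j \<and> j \<le> length (Sn n) \<and> Sn n ! (j - 1) = x)"

end

theory Submission
  imports Defs "HOL-Library.FuncSet"
begin


lemma weight_Cons[simp]: "weight (c # x) = (if c then Suc (weight x) else weight x)"
  by (simp add: weight_def)
lemma weight_Nil[simp]: "weight [] = 0" by (simp add: weight_def)
lemma weight_append[simp]: "weight (x @ y) = weight x + weight y" by (simp add: weight_def)
lemma weight_le: "weight x \<le> length x" by (simp add: weight_def)

lemma finite_len: "finite {y::bool list. length y = n \<and> P y}"
proof -
  have "finite {xs::bool list. set xs \<subseteq> UNIV \<and> length xs = n}"
    by (rule finite_lists_length_eq) simp
  then show ?thesis by (rule finite_subset[rotated]) auto
qed

lemma split_len:
  "{y::bool list. length y = Suc n \<and> P y} =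
    Cons True ` {y. length y = n \<and> P (True # y)} \<union> Cons False ` {y. length y = n \<and> P (False # y)}"
  (is "?L = ?R")
proof
  show "?L \<subseteq> ?R"
  proof
    fix y assume "y \<in> ?L"
    then obtain c z where "y = c # z" "length z = n" "P (c # z)" by (cases y) auto
    then show "y \<in> ?R" by (cases c) auto
  qed
qed auto

lemma card_split_len:
  "card {y::bool list. length y = Suc n \<and> P y} =
    card {y. length y = n \<and> P (True # y)} + card {y. length y = n \<and> P (False # y)}"
  unfolding split_len
  by (subst card_Un_disjoint) (auto simp: card_image finite_len)

lemma card_layer: "card {y::bool list. length y = n \<and> weight y = k} = n choose k"
proof (induction n arbitrary: k)
  case 0
  have "{y::bool list. length y = 0 \<and> weight y = k} = (if k = 0 then {[]} else {})" by auto
  then show ?case by simp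
next
  case (Suc n)
  show ?case
  proof (cases k)
    case 0
    have "{y::bool list. length y = n \<and> Suc (weight y) = 0} = {}" by auto
    then show ?thesis using Suc 0 by (simp add: card_split_len)
  next
    case (Suc k')
    then show ?thesis using Suc.IH by (simp add: card_split_len)
  qed
qed

lemma card_len_weightP:
  "card {y::bool list. length y = n \<and> P (weight y)} = (\<Sum>i\<le>n. if P i then n choose i else 0)"
proof -
  have "{y::bool list. length y = n \<and> P (weight y)} =
        (\<Union>i\<in>{i. i \<le> n \<and> P i}. {y. length y = n \<and> weight y = i})"
    using weight_le by fastforce
  then have "card {y::bool list. length y = n \<and> P (weight y)} =
      (\<Sum>i\<in>{i. i \<le> n \<and> P i}. card {y::bool list. length y = n \<and> weight y = i})"
    by (simp only:) (rule card_UN_disjoint, auto simp: finite_len)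
  also have "\<dots> = (\<Sum>i\<in>{i. i \<le> n \<and> P i}. n choose i)" by (simp add: card_layer)
  also have "\<dots> = (\<Sum>i\<le>n. if P i then n choose i else 0)"
    by (simp add: sum.If_cases Int_def conj_commute)
  finally show ?thesis .
qed

fun lrf :: "bool list \<Rightarrow> nat" where
  "lrf [] = 0"
| "lrf (c # x) = (if c then length x choose Suc (weight x) else 0) + lrf x"

lemma lrf_card: "lrf x = card {y. length y = length x \<and> weight y = weight x \<and> y < x}"
proof (induction x)
  case Nil then show ?case by simp
next
  case (Cons c x)
  show ?case
  proof (cases c)
    case True
    have "card {y. length y = length (c#x) \<and> weight y = weight (c#x) \<and> y < c # x}
      = card {y. length y = length x \<and> weight y = weight x \<and> y < x}
        + card {y. length y = length x \<and> weight y = Suc (weight x)}"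
      using True by (simp add: card_split_len)
    then show ?thesis using Cons True by (simp add: card_layer)
  next
    case False
    have "card {y. length y = length (c#x) \<and> weight y = weight (c#x) \<and> y < c # x}
      = card {y. length y = length x \<and> weight y = weight x \<and> y < x}"
      using False by (simp add: card_split_len)
    then show ?thesis using Cons False by simp
  qed
qed




declare upt_Suc[simp del]


lemma sorted_wrt_asym_distinct:
  assumes "sorted_wrt R L" "\<And>x y. R x y \<Longrightarrow> \<not> R y x"
  shows "distinct L"
  using assms(1)
proof (induction L)
  case (Cons a L) then show ?case using assms(2) by auto
qed simp

lemma card_index:
  assumes s: "sorted_wrt R L" and asym: "\<And>x y. R x y \<Longrightarrow> \<not> R y x" and x: "x \<in> set L"
  shows "card {y \<in> set L. R y x} < length L \<and> L ! card {y \<in> set L. R y x} = x"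
proof -
  have d: "distinct L" by (rule sorted_wrt_asym_distinct[OF s asym])
  obtain i where i: "i < length L" "L ! i = x" using x by (auto simp: in_set_conv_nth)
  have "{y \<in> set L. R y x} = set (take i L)"
  proof
    show "{y \<in> set L. R y x} \<subseteq> set (take i L)"
    proof
      fix y assume y: "y \<in> {y \<in> set L. R y x}"
      then obtain j where j: "j < length L" "L ! j = y" by (auto simp: in_set_conv_nth)
      have "j < i"
      proof (rule ccontr)
        assume "\<not> j < i"
        then have "j = i \<or> i < j" by auto
        then show False
        proof
          assume "j = i" then show False using y i j asym by blast
        next
          assume "i < j" then have "R x y" using sorted_wrt_nth_less[OF s _ j(1)] i j by blast
          then show False using y asym by blast
        qed
      qed
      then show "y \<in> set (take i L)" using j by (auto simp: in_set_conv_nth)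
    qed
  next
    show "set (take i L) \<subseteq> {y \<in> set L. R y x}"
    proof
      fix y assume "y \<in> set (take i L)"
      then obtain j where j: "j < i" "L ! j = y" using i by (auto simp: in_set_conv_nth)
      then have "R y x" using sorted_wrt_nth_less[OF s j(1) i(1)] i by simp
      then show "y \<in> {y \<in> set L. R y x}" using j i by auto
    qed
  qed
  then have c: "card {y \<in> set L. R y x} = i"
    using d i by (simp add: distinct_card)
  show ?thesis unfolding c using i by simp
qed

lemma THE_index:
  assumes s: "sorted_wrt R L" and asym: "\<And>x y. R x y \<Longrightarrow> \<not> R y x" and x: "x \<in> set L"
  shows "(THE j. 1 \<le> j \<and> j \<le> length L \<and> L ! (j - 1) = x) = Suc (card {y \<in> set L. R y x})"
proof (rule the_equality)
  have d: "distinct L" by (rule sorted_wrt_asym_distinct[OF s asym])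
  note ci = card_index[OF s asym x]
  show "1 \<le> Suc (card {y \<in> set L. R y x}) \<and> Suc (card {y \<in> set L. R y x}) \<le> length L \<and> L ! (Suc (card {y \<in> set L. R y x}) - 1) = x"
    using ci by simp
  fix j assume "1 \<le> j \<and> j \<le> length L \<and> L ! (j - 1) = x"
  then have "j - 1 < length L" "L ! (j - 1) = L ! card {y \<in> set L. R y x}" using ci by auto
  then have "j - 1 = card {y \<in> set L. R y x}" using d ci nth_eq_iff_index_eq by blast
  then show "j = Suc (card {y \<in> set L. R y x})" using \<open>1 \<le> j \<and> _\<close> by auto
qed



lemma sorted_wrt_concat_map:
  assumes "sorted_wrt Q ws" "\<forall>w\<in>set ws. sorted_wrt R (g w)"
    "\<forall>w\<in>set ws. \<forall>w'\<in>set ws. Q w w' \<longrightarrow> (\<forall>x\<in>set (g w). \<forall>y\<in>set (g w'). R x y)"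
  shows "sorted_wrt R (concat (map g ws))"
  using assms by (induction ws) (auto simp: sorted_wrt_append)


definition Rk :: "bool list \<Rightarrow> bool list \<Rightarrow> bool" where
  "Rk y x \<longleftrightarrow> (odd (weight y) \<and> even (weight x))
     \<or> (odd (weight y) \<and> odd (weight x) \<and> (weight y < weight x \<or> (weight y = weight x \<and> x < y)))
     \<or> (even (weight y) \<and> even (weight x) \<and> (weight x < weight y \<or> (weight y = weight x \<and> y < x)))"

lemma Rk_asym: "Rk x y \<Longrightarrow> \<not> Rk y x"
proof
  assume a: "Rk x y" and b: "Rk y x"
  have l: "\<not> (x < y \<and> y < x)" for x y :: "bool list" by (meson less_not_sym)
  show False using a b l[of x y] unfolding Rk_def by linarith
qed


lemma Rk_I1: "odd (weight y) \<Longrightarrow> even (weight x) \<Longrightarrow> Rk y x" by (simp add: Rk_def)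
lemma Rk_I2: "odd (weight y) \<Longrightarrow> odd (weight x) \<Longrightarrow> weight y < weight x \<Longrightarrow> Rk y x" by (simp add: Rk_def)
lemma Rk_I3: "odd (weight y) \<Longrightarrow> weight y = weight x \<Longrightarrow> x < y \<Longrightarrow> Rk y x" by (simp add: Rk_def)
lemma Rk_I4: "even (weight y) \<Longrightarrow> even (weight x) \<Longrightarrow> weight x < weight y \<Longrightarrow> Rk y x" by (simp add: Rk_def)
lemma Rk_I5: "even (weight y) \<Longrightarrow> weight y = weight x \<Longrightarrow> y < x \<Longrightarrow> Rk y x" by (simp add: Rk_def)

lemma set_Sseq: "set (Sseq n i) = {x. length x = n \<and> weight x = i}"
  unfolding Sseq_def by (simp add: finite_len)

lemma sorted_Sseq: "sorted_wrt (<) (Sseq n i)"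
  unfolding Sseq_def by (rule strict_sorted_list_of_set)




lemma set_Sn: "set (Sn n) = Qv n"
proof
  show "set (Sn n) \<subseteq> Qv n"
  proof
    fix x assume "x \<in> set (Sn n)"
    then obtain w where "x \<in> set (Rseq n w) \<or> x \<in> set (Sseq n w)"
      unfolding Sn_def set_append set_concat set_map by blast
    then show "x \<in> Qv n" by (auto simp: Rseq_def set_Sseq Qv_def)
  qed
  show "Qv n \<subseteq> set (Sn n)"
  proof
    fix x assume "x \<in> Qv n"
    then have x: "length x = n" "weight x \<le> n" using weight_le by (auto simp: Qv_def)
    have w: "weight x \<in> set [0..<Suc n]" using x(2) by (simp only: set_upt) simp
    show "x \<in> set (Sn n)"
    proof (cases "odd (weight x)")
      case True
      then have "x \<in> set (Rseq n (weight x))" "weight x \<in> set (filter odd [0..<Suc n])"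
        using x w by (simp_all add: Rseq_def set_Sseq)
      then show ?thesis unfolding Sn_def set_append set_concat set_map image_image by blast
    next
      case False
      then have "x \<in> set (Sseq n (weight x))" "weight x \<in> set (rev (filter even [0..<Suc n]))"
        using x w by (simp_all add: set_Sseq)
      then show ?thesis unfolding Sn_def set_append set_concat set_map image_image by blast
    qed
  qed
qed

lemma sorted_Sn: "sorted_wrt Rk (Sn n)"
  unfolding Sn_def sorted_wrt_append
proof (intro conjI)
  show "sorted_wrt Rk (concat (map (Rseq n) (filter odd [0..<Suc n])))"
  proof (rule sorted_wrt_concat_map[where Q="(<)"])
    show "sorted_wrt (<) (filter odd [0..<Suc n])"
      by (rule sorted_wrt_filter) (rule sorted_wrt_upt)
    show "\<forall>w\<in>set (filter odd [0..<Suc n]). sorted_wrt Rk (Rseq n w)"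
    proof
      fix w assume w: "w \<in> set (filter odd [0..<Suc n])"
      have "sorted_wrt (\<lambda>x y. Rk y x) (Sseq n w)"
      proof (rule sorted_wrt_mono_rel[OF _ sorted_Sseq])
        fix x y assume "x \<in> set (Sseq n w)" "y \<in> set (Sseq n w)" "x < y"
        then show "Rk y x" using w by (intro Rk_I3) (auto simp: set_Sseq)
      qed
      then show "sorted_wrt Rk (Rseq n w)" by (simp add: Rseq_def sorted_wrt_rev)
    qed
    show "\<forall>w\<in>set (filter odd [0..<Suc n]). \<forall>w'\<in>set (filter odd [0..<Suc n]). w < w' \<longrightarrow>
        (\<forall>x\<in>set (Rseq n w). \<forall>y\<in>set (Rseq n w'). Rk x y)"
    proof (intro ballI impI)
      fix w w' x y assume "w \<in> set (filter odd [0..<Suc n])" "w' \<in> set (filter odd [0..<Suc n])"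
        "w < w'" "x \<in> set (Rseq n w)" "y \<in> set (Rseq n w')"
      then show "Rk x y" by (intro Rk_I2) (auto simp: Rseq_def set_Sseq)
    qed
  qed
  show "sorted_wrt Rk (concat (map (Sseq n) (rev (filter even [0..<Suc n]))))"
  proof (rule sorted_wrt_concat_map[where Q="(>)"])
    show "sorted_wrt (>) (rev (filter even [0..<Suc n]))"
      unfolding sorted_wrt_rev by (rule sorted_wrt_filter) (rule sorted_wrt_upt)
    show "\<forall>w\<in>set (rev (filter even [0..<Suc n])). sorted_wrt Rk (Sseq n w)"
    proof
      fix w assume w: "w \<in> set (rev (filter even [0..<Suc n]))"
      show "sorted_wrt Rk (Sseq n w)"
      proof (rule sorted_wrt_mono_rel[OF _ sorted_Sseq])
        fix x y assume "x \<in> set (Sseq n w)" "y \<in> set (Sseq n w)" "x < y"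
        then show "Rk x y" using w by (intro Rk_I5) (auto simp: set_Sseq)
      qed
    qed
    show "\<forall>w\<in>set (rev (filter even [0..<Suc n])). \<forall>w'\<in>set (rev (filter even [0..<Suc n])). w > w' \<longrightarrow>
        (\<forall>x\<in>set (Sseq n w). \<forall>y\<in>set (Sseq n w'). Rk x y)"
    proof (intro ballI impI)
      fix w w' x y assume "w \<in> set (rev (filter even [0..<Suc n]))" "w' \<in> set (rev (filter even [0..<Suc n]))"
        "w > w'" "x \<in> set (Sseq n w)" "y \<in> set (Sseq n w')"
      then show "Rk x y" by (intro Rk_I4) (auto simp: set_Sseq)
    qed
  qed
  show "\<forall>x\<in>set (concat (map (Rseq n) (filter odd [0..<Suc n]))).
       \<forall>y\<in>set (concat (map (Sseq n) (rev (filter even [0..<Suc n])))). Rk x y"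
  proof (intro ballI)
    fix x y assume "x \<in> set (concat (map (Rseq n) (filter odd [0..<Suc n])))"
      "y \<in> set (concat (map (Sseq n) (rev (filter even [0..<Suc n]))))"
    then show "Rk x y" by (intro Rk_I1) (auto simp: Rseq_def set_Sseq)
  qed
qed

lemma fn_eq: "x \<in> Qv n \<Longrightarrow> fn n x = Suc (card {y \<in> Qv n. Rk y x})"
  unfolding fn_def using THE_index[OF sorted_Sn Rk_asym, of x n] by (simp add: set_Sn)

lemma distinct_Sn: "distinct (Sn n)"
  by (rule sorted_wrt_asym_distinct[OF sorted_Sn Rk_asym])

lemma card_Qv: "card (Qv n) = 2 ^ n"
proof -
  have "card {xs::bool list. set xs \<subseteq> UNIV \<and> length xs = n} = card (UNIV::bool set) ^ n"
    by (rule card_lists_length_eq) simp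
  then show ?thesis by (simp add: Qv_def)
qed

lemma length_Sn: "length (Sn n) = 2 ^ n"
  using distinct_card[OF distinct_Sn, of n] by (simp add: set_Sn card_Qv)

lemma fn_bij: "bij_betw (fn n) (Qv n) {1..card (Qv n)}"
proof -
  let ?L = "Sn n"
  have ci: "\<And>z. z \<in> Qv n \<Longrightarrow> card {y \<in> Qv n. Rk y z} < 2 ^ n \<and> ?L ! card {y \<in> Qv n. Rk y z} = z"
    using card_index[OF sorted_Sn Rk_asym] by (simp add: set_Sn length_Sn)
  have inj: "inj_on (fn n) (Qv n)"
  proof
    fix x y assume x: "x \<in> Qv n" and y: "y \<in> Qv n" and e: "fn n x = fn n y"
    then have "card {z \<in> Qv n. Rk z x} = card {z \<in> Qv n. Rk z y}" by (simp add: fn_eq)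
    then show "x = y" using ci[OF x] ci[OF y] by metis
  qed
  have sub: "fn n ` Qv n \<subseteq> {1..card (Qv n)}"
    using ci by (auto simp: fn_eq card_Qv Suc_le_eq)
  have "card (fn n ` Qv n) = card {1..card (Qv n)}"
    using inj by (simp add: card_image)
  then have "fn n ` Qv n = {1..card (Qv n)}"
    using sub by (intro card_subset_eq) auto
  then show ?thesis using inj by (simp add: bij_betw_def)
qed




definition csI :: "nat \<Rightarrow> (nat \<Rightarrow> bool) \<Rightarrow> int" where
  "csI n P = (\<Sum>i\<le>n. if P i then int (n choose i) else 0)"

lemma card_lenP_int: "int (card {y::bool list. length y = n \<and> P (weight y)}) = csI n P"
  unfolding card_len_weightP csI_def of_nat_sum by (rule sum.cong) auto

lemma layer_split:
  assumes "length x = n" "weight x = t"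
  shows "card {y. length y = n \<and> weight y = t \<and> x < y} + lrf x + 1 = n choose t"
proof -
  let ?L = "{y::bool list. length y = n \<and> weight y = t}"
  have "?L = {y. length y = n \<and> weight y = t \<and> y < x} \<union> ({x} \<union> {y. length y = n \<and> weight y = t \<and> x < y})"
  proof (rule set_eqI)
    fix y :: "bool list"
    have "y < x \<or> y = x \<or> x < y" by (rule less_linear)
    then show "y \<in> ?L \<longleftrightarrow> y \<in> {y. length y = n \<and> weight y = t \<and> y < x} \<union> ({x} \<union> {y. length y = n \<and> weight y = t \<and> x < y})"
      using assms by blast
  qed
  moreover have "card ({x} \<union> {y. length y = n \<and> weight y = t \<and> x < y}) = 1 + card {y. length y = n \<and> weight y = t \<and> x < y}"
  proof -
    have "x \<notin> {y. length y = n \<and> weight y = t \<and> x < y}" by simp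
    then show ?thesis by (simp add: card_insert_disjoint finite_len)
  qed
  moreover have "card ({y. length y = n \<and> weight y = t \<and> y < x} \<union> ({x} \<union> {y. length y = n \<and> weight y = t \<and> x < y})) =
     card {y. length y = n \<and> weight y = t \<and> y < x} + card ({x} \<union> {y. length y = n \<and> weight y = t \<and> x < y})"
  proof (rule card_Un_disjoint)
    have "\<not> (y < x \<and> x < y)" for y :: "bool list" by (meson less_asym)
    then show "{y. length y = n \<and> weight y = t \<and> y < x} \<inter> ({x} \<union> {y. length y = n \<and> weight y = t \<and> x < y}) = {}"
      by blast
  qed (simp_all add: finite_len)
  ultimately have "card ?L = card {y. length y = n \<and> weight y = t \<and> y < x} + (1 + card {y. length y = n \<and> weight y = t \<and> x < y})"
    by simp
  then show ?thesis using assms by (simp add: card_layer lrf_card)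
qed

lemma Rk_odd: "odd (weight x) \<Longrightarrow> Rk y x \<longleftrightarrow> (odd (weight y) \<and> weight y < weight x) \<or> (weight y = weight x \<and> x < y)"
  unfolding Rk_def by (cases "odd (weight y)") (simp_all, metis)

lemma Rk_even: "even (weight x) \<Longrightarrow> Rk y x \<longleftrightarrow> (odd (weight y) \<or> weight x < weight y) \<or> (weight y = weight x \<and> y < x)"
  unfolding Rk_def by blast

lemma fn_odd:
  assumes x: "x \<in> Qv n" and o: "odd (weight x)"
  shows "int (fn n x) + int (lrf x) = csI n (\<lambda>i. odd i \<and> i < weight x) + int (n choose weight x)"
proof -
  let ?A = "{y::bool list. length y = n \<and> (\<lambda>i. odd i \<and> i < weight x) (weight y)}"
  let ?B = "{y. length y = n \<and> weight y = weight x \<and> x < y}"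
  have "{y \<in> Qv n. Rk y x} = ?A \<union> ?B" by (rule set_eqI) (simp add: Qv_def Rk_odd[OF o], blast)
  moreover have "card (?A \<union> ?B) = card ?A + card ?B"
  proof (rule card_Un_disjoint)
    show "?A \<inter> ?B = {}" by (rule equals0I) (clarify, simp)
  qed (simp_all add: finite_len)
  ultimately have "card {y \<in> Qv n. Rk y x} = card ?A + card ?B" by simp
  moreover have "card ?B + lrf x + 1 = n choose weight x" using x by (intro layer_split) (auto simp: Qv_def)
  moreover note card_lenP_int[of n "\<lambda>i. odd i \<and> i < weight x"]
  ultimately show ?thesis using fn_eq[OF x] by simp
qed

lemma fn_even:
  assumes x: "x \<in> Qv n" and e: "even (weight x)"
  shows "int (fn n x) = csI n (\<lambda>i. odd i \<or> weight x < i) + int (lrf x) + 1"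
proof -
  let ?A = "{y::bool list. length y = n \<and> (\<lambda>i. odd i \<or> weight x < i) (weight y)}"
  let ?B = "{y. length y = n \<and> weight y = weight x \<and> y < x}"
  have "{y \<in> Qv n. Rk y x} = ?A \<union> ?B" by (rule set_eqI) (simp add: Qv_def Rk_even[OF e], blast)
  moreover have "card (?A \<union> ?B) = card ?A + card ?B"
  proof (rule card_Un_disjoint)
    show "?A \<inter> ?B = {}" using e by (intro equals0I) (clarify, simp)
  qed (simp_all add: finite_len)
  ultimately have "card {y \<in> Qv n. Rk y x} = card ?A + card ?B" by simp
  moreover have "card ?B = lrf x" using x by (simp add: lrf_card Qv_def)
  moreover note card_lenP_int[of n "\<lambda>i. odd i \<or> weight x < i"]
  ultimately show ?thesis using fn_eq[OF x] by simp
qed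




definition VV :: "nat \<Rightarrow> nat \<Rightarrow> int" where
  "VV n t = (\<Sum>i\<le>n. (if odd i then int (n choose i) else 0)
      + (if (odd i \<and> i \<le> t) \<or> (even i \<and> t < i) then int (n choose i) else 0))"

lemma VV0: "VV n 0 = 2 ^ n - 1"
proof -
  have "VV n 0 = (\<Sum>i\<le>n. int (n choose i) - (if i = 0 then 1 else 0))"
    unfolding VV_def by (rule sum.cong) auto
  also have "\<dots> = (\<Sum>i\<le>n. int (n choose i)) - 1"
    by (simp add: sum_subtractf)
  also have "(\<Sum>i\<le>n. int (n choose i)) = 2 ^ n"
    by (metis choose_row_sum of_nat_numeral of_nat_power of_nat_sum)
  finally show ?thesis .
qed

lemma VV_Suc:
  assumes "Suc t \<le> n"
  shows "VV n (Suc t) = VV n t + (if odd (Suc t) then int (n choose Suc t) else - int (n choose Suc t))"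
proof -
  have "VV n (Suc t) = (\<Sum>i\<le>n. ((if odd i then int (n choose i) else 0)
      + (if (odd i \<and> i \<le> t) \<or> (even i \<and> t < i) then int (n choose i) else 0))
      + (if i = Suc t then (if odd i then int (n choose i) else - int (n choose i)) else 0))"
    unfolding VV_def by (rule sum.cong) auto
  also have "\<dots> = VV n t + (\<Sum>i\<le>n. if i = Suc t then (if odd i then int (n choose i) else - int (n choose i)) else 0)"
    unfolding VV_def by (simp add: sum.distrib)
  also have "(\<Sum>i\<le>n. if i = Suc t then (if odd i then int (n choose i) else - int (n choose i)) else 0)
      = (if odd (Suc t) then int (n choose Suc t) else - int (n choose Suc t))"
    using assms by (subst sum.delta) auto
  finally show ?thesis .
qed

lemma VV_closed:
  assumes "t \<le> n" "n = Suc m"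
  shows "VV n t = 2 ^ n + (if odd t then int (m choose t) else - int (m choose t))"
  using assms(1)
proof (induction t)
  case 0 then show ?case by (simp add: VV0)
next
  case (Suc t)
  then have IH: "VV n t = 2 ^ n + (if odd t then int (m choose t) else - int (m choose t))" by simp
  have P: "int (n choose Suc t) = int (m choose t) + int (m choose Suc t)" using assms(2) by simp
  show ?case using VV_Suc[OF Suc.prems] IH P by auto
qed

definition G :: "bool list \<Rightarrow> bool list \<Rightarrow> int" where
  "G p q = int (lrf p) - int (lrf q) - int ((length p - 1) choose weight p)"

lemma edge_sum:
  fixes a b :: "bool list"
  defines "p \<equiv> a @ True # b" and "q \<equiv> a @ False # b"
  shows "int (fn (length p) p) + int (fn (length p) q)
       = 2 ^ length p + 1 + (if odd (weight p) then - G p q else G p q)"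
proof -
  define n where "n = length p"
  define t where "t = weight p"
  define m where "m = length a + length b"
  have n: "n = Suc m" by (simp add: n_def m_def p_def)
  have t: "t = Suc (weight a + weight b)" by (simp add: t_def p_def)
  have wq: "weight q = weight a + weight b" by (simp add: q_def)
  have tn: "t \<le> n" using weight_le[of p] by (simp add: t_def n_def)
  have pQ: "p \<in> Qv n" and qQ: "q \<in> Qv n" by (simp_all add: Qv_def n_def p_def q_def)
  have delta: "int (n choose k) = (\<Sum>i\<le>n. if i = k then int (n choose i) else 0)" if "k \<le> n" for k
    using that by (subst sum.delta) auto
  show ?thesis
  proof (cases "odd t")
    case True
    have fp: "int (fn n p) + int (lrf p) = csI n (\<lambda>i. odd i \<and> i < t) + int (n choose t)"
      using fn_odd[OF pQ] True by (simp add: t_def)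
    have fq: "int (fn n q) = csI n (\<lambda>i. odd i \<or> t - 1 < i) + int (lrf q) + 1"
      using fn_even[OF qQ] True by (simp add: wq t)
    have "csI n (\<lambda>i. odd i \<and> i < t) + int (n choose t) + csI n (\<lambda>i. odd i \<or> t - 1 < i)
      = (\<Sum>i\<le>n. (if odd i \<and> i < t then int (n choose i) else 0) + (if i = t then int (n choose i) else 0)
          + (if odd i \<or> t - 1 < i then int (n choose i) else 0))"
      unfolding csI_def delta[OF tn] by (simp add: sum.distrib)
    also have "\<dots> = VV n t" unfolding VV_def using True by (intro sum.cong) auto
    also have "\<dots> = 2 ^ n + int (m choose t)" using VV_closed[OF tn n] True by simp
    finally have "csI n (\<lambda>i. odd i \<and> i < t) + int (n choose t) + csI n (\<lambda>i. odd i \<or> t - 1 < i) = 2 ^ n + int (m choose t)" .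
    then show ?thesis using fp fq True
      by (simp add: G_def n_def[symmetric] t_def[symmetric] m_def n)
  next
    case False
    have t1: "t - 1 \<le> n" using tn by simp
    have t0: "0 < t" using t by simp
    have fp: "int (fn n p) = csI n (\<lambda>i. odd i \<or> t < i) + int (lrf p) + 1"
      using fn_even[OF pQ] False by (simp add: t_def)
    have fq: "int (fn n q) + int (lrf q) = csI n (\<lambda>i. odd i \<and> i < t - 1) + int (n choose (t - 1))"
      using fn_odd[OF qQ] False by (simp add: wq t)
    have "csI n (\<lambda>i. odd i \<or> t < i) + csI n (\<lambda>i. odd i \<and> i < t - 1) + int (n choose (t - 1))
      = (\<Sum>i\<le>n. (if odd i \<or> t < i then int (n choose i) else 0) + (if odd i \<and> i < t - 1 then int (n choose i) else 0)
          + (if i = t - 1 then int (n choose i) else 0))"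
      unfolding csI_def delta[OF t1] by (simp add: sum.distrib)
    also have "\<dots> = VV n t" unfolding VV_def using False t0
    proof (intro sum.cong refl)
      fix i assume "i \<in> {..n}"
      show "(if odd i \<or> t < i then int (n choose i) else 0) + (if odd i \<and> i < t - 1 then int (n choose i) else 0)
          + (if i = t - 1 then int (n choose i) else 0) = (if odd i then int (n choose i) else 0)
      + (if (odd i \<and> i \<le> t) \<or> (even i \<and> t < i) then int (n choose i) else 0)"
      proof (cases "odd i")
        case True
        then have "i \<noteq> t" using False by auto
        then show ?thesis using True t0 by auto
      next
        case False2: False
        then have "i \<noteq> t - 1" using False t0 by (metis Suc_diff_1 even_Suc)
        then show ?thesis using False2 by auto
      qed
    qed
    also have "\<dots> = 2 ^ n - int (m choose t)" using VV_closed[OF tn n] False by simp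
    finally have "csI n (\<lambda>i. odd i \<or> t < i) + csI n (\<lambda>i. odd i \<and> i < t - 1) + int (n choose (t - 1)) = 2 ^ n - int (m choose t)" .
    then show ?thesis using fp fq False
      by (simp add: G_def n_def[symmetric] t_def[symmetric] m_def n)
  qed
qed




lemma G_base: "G (True # b) (False # b) = 0"
  by (simp add: G_def)

lemma G_cons:
  "G (c # a @ True # b) (c # a @ False # b)
     = G (a @ True # b) (a @ False # b) - int ((length a + length b) choose (weight a + weight b))"
proof -
  define m where "m = length a + length b"
  define k where "k = weight a + weight b"
  have P: "Suc m choose Suc k = (m choose k) + (m choose Suc k)" by simp
  show ?thesis
  proof (cases c)
    case True
    have "G (c # a @ True # b) (c # a @ False # b)
      = int (Suc m choose Suc (Suc k)) + int (lrf (a @ True # b)) - int (Suc m choose Suc k) - int (lrf (a @ False # b))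
        - int (Suc m choose Suc (Suc k))"
      using True by (simp add: G_def m_def k_def)
    moreover have "G (a @ True # b) (a @ False # b) = int (lrf (a @ True # b)) - int (lrf (a @ False # b)) - int (m choose Suc k)"
      by (simp add: G_def m_def k_def)
    ultimately show ?thesis using P by (simp add: m_def[symmetric] k_def[symmetric])
  next
    case False
    have "G (c # a @ True # b) (c # a @ False # b)
      = int (lrf (a @ True # b)) - int (lrf (a @ False # b)) - int (Suc m choose Suc k)"
      using False by (simp add: G_def m_def k_def)
    moreover have "G (a @ True # b) (a @ False # b) = int (lrf (a @ True # b)) - int (lrf (a @ False # b)) - int (m choose Suc k)"
      by (simp add: G_def m_def k_def)
    ultimately show ?thesis using P by (simp add: m_def[symmetric] k_def[symmetric])
  qed
qed

abbreviation cc :: "nat \<Rightarrow> nat" where "cc j \<equiv> j choose (j div 2)"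

lemma G_bounds:
  "- (\<Sum>j<length a + length b. int (cc j)) \<le> G (a @ True # b) (a @ False # b)
   \<and> G (a @ True # b) (a @ False # b) \<le> 0"
proof (induction a)
  case Nil
  have "0 \<le> (\<Sum>j<length b. int (cc j))" by (rule sum_nonneg) simp
  then show ?case by (simp add: G_base)
next
  case (Cons c a)
  have "(length a + length b) choose (weight a + weight b) \<le> cc (length a + length b)"
    by (rule binomial_maximum)
  then show ?case using Cons by (simp add: G_cons)
qed

fun alt0 :: "nat \<Rightarrow> bool list" where
  "alt0 0 = []"
| "alt0 (Suc l) = odd l # alt0 l"

lemma length_alt0[simp]: "length (alt0 l) = l" by (induction l) auto

lemma weight_alt0[simp]: "weight (alt0 l) = l div 2"
  by (induction l) auto

lemma G_alt: "G (alt0 l @ [True]) (alt0 l @ [False]) = - (\<Sum>j<l. int (cc j))"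
proof (induction l)
  case 0 then show ?case using G_base[of "[]"] by simp
next
  case (Suc l)
  have "G (alt0 (Suc l) @ [True]) (alt0 (Suc l) @ [False]) = G (odd l # alt0 l @ True # []) (odd l # alt0 l @ False # [])"
    by simp
  also have "\<dots> = G (alt0 l @ [True]) (alt0 l @ [False]) - int (cc l)"
    by (subst G_cons) simp
  finally show ?case using Suc by simp
qed

lemma adj_decomp:
  assumes lx: "length x = n" and ly: "length y = n" and adj: "Qadj n x y"
  shows "\<exists>a b. (x = a @ True # b \<and> y = a @ False # b) \<or> (x = a @ False # b \<and> y = a @ True # b)"
proof -
  from adj have "card {i. i < n \<and> x ! i \<noteq> y ! i} = 1" by (simp add: Qadj_def)
  then obtain k where k: "{i. i < n \<and> x ! i \<noteq> y ! i} = {k}" by (rule card_1_singletonE)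
  then have kn: "k < n" and kd: "x ! k \<noteq> y ! k" by auto
  have same: "x ! i = y ! i" if "i < n" "i \<noteq> k" for i
    using k that by blast
  have tk: "take k x = take k y"
    by (rule nth_equalityI) (use lx ly kn same in auto)
  have dk: "drop (Suc k) x = drop (Suc k) y"
    by (rule nth_equalityI) (use lx ly kn same in auto)
  define a where "a = take k x"
  define b where "b = drop (Suc k) x"
  have x: "take k x @ x ! k # drop (Suc k) x = x" using kn lx by (simp add: id_take_nth_drop[symmetric])
  have y: "take k y @ y ! k # drop (Suc k) y = y" using kn ly by (simp add: id_take_nth_drop[symmetric])
  have x': "x = a @ x ! k # b" unfolding a_def b_def using x by simp
  have y': "y = a @ y ! k # b" unfolding a_def b_def using y tk dk by simp
  show ?thesis
  proof (cases "x ! k")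
    case True
    then have "y ! k = False" using kd by simp
    then have "y = a @ False # b" using y' by (simp only:)
    moreover have "x = a @ True # b" using x' True by (simp only: True)
    ultimately have "x = a @ True # b \<and> y = a @ False # b" by (rule conjI[rotated])
    then show ?thesis by blast
  next
    case False
    then have "y ! k = True" using kd by simp
    then have "y = a @ True # b" using y' by (simp only:)
    moreover have "x = a @ False # b" using x' False by (simp only: False)
    ultimately have "x = a @ False # b \<and> y = a @ True # b" by (rule conjI[rotated])
    then show ?thesis by blast
  qed
qed

lemma adj_pair: "Qadj (length (a @ True # b)) (a @ True # b) (a @ False # b)"
proof -
  have "{i. i < length (a @ True # b) \<and> (a @ True # b) ! i \<noteq> (a @ False # b) ! i} = {length a}"
    by (rule set_eqI) (auto simp: nth_append nth_Cons split: nat.splits)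
  then show ?thesis by (simp add: Qadj_def)
qed

lemma str_of_ge:
  assumes "finite V" "u \<in> V" "v \<in> V" "E u v"
  shows "f u + f v \<le> str_of f V E"
proof -
  have "{f u + f v | u v. u \<in> V \<and> v \<in> V \<and> E u v} \<subseteq> (\<lambda>(u, v). f u + f v) ` (V \<times> V)" by auto
  then have "finite {f u + f v | u v. u \<in> V \<and> v \<in> V \<and> E u v}"
    using assms(1) by (meson finite_SigmaI finite_imageI finite_subset)
  then show ?thesis unfolding str_of_def using assms by (intro Max_ge) auto
qed

lemma str_of_le:
  assumes "finite V" "u0 \<in> V" "v0 \<in> V" "E u0 v0"
    and "\<And>u v. u \<in> V \<Longrightarrow> v \<in> V \<Longrightarrow> E u v \<Longrightarrow> f u + f v \<le> B"
  shows "str_of f V E \<le> B"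
proof -
  have "{f u + f v | u v. u \<in> V \<and> v \<in> V \<and> E u v} \<subseteq> (\<lambda>(u, v). f u + f v) ` (V \<times> V)" by auto
  then have "finite {f u + f v | u v. u \<in> V \<and> v \<in> V \<and> E u v}"
    using assms(1) by (meson finite_SigmaI finite_imageI finite_subset)
  then show ?thesis unfolding str_of_def using assms by (intro Max.boundedI) auto
qed

lemma strength_le:
  assumes fin: "finite V" and bij: "bij_betw f V {1..card V}"
  shows "strength V E \<le> str_of f V E"
proof -
  let ?S = "{str_of g V E | g. bij_betw g V {1..card V}}"
  have r: "str_of (restrict g V) V E = str_of g V E" for g
  proof -
    have "{restrict g V u + restrict g V v | u v. u \<in> V \<and> v \<in> V \<and> E u v}
        = {g u + g v | u v. u \<in> V \<and> v \<in> V \<and> E u v}"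
    proof (intro set_eqI iffI)
      fix s assume "s \<in> {restrict g V u + restrict g V v | u v. u \<in> V \<and> v \<in> V \<and> E u v}"
      then obtain u v where "s = restrict g V u + restrict g V v" "u \<in> V" "v \<in> V" "E u v" by blast
      then have "s = g u + g v" by (simp add: restrict_def)
      then show "s \<in> {g u + g v | u v. u \<in> V \<and> v \<in> V \<and> E u v}" using \<open>u \<in> V\<close> \<open>v \<in> V\<close> \<open>E u v\<close> by blast
    next
      fix s assume "s \<in> {g u + g v | u v. u \<in> V \<and> v \<in> V \<and> E u v}"
      then obtain u v where "s = g u + g v" "u \<in> V" "v \<in> V" "E u v" by blast
      then have "s = restrict g V u + restrict g V v" by (simp add: restrict_def)
      then show "s \<in> {restrict g V u + restrict g V v | u v. u \<in> V \<and> v \<in> V \<and> E u v}" using \<open>u \<in> V\<close> \<open>v \<in> V\<close> \<open>E u v\<close> by blast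
    qed
    then show ?thesis by (simp add: str_of_def)
  qed
  have "?S \<subseteq> (\<lambda>g. str_of g V E) ` (PiE V (\<lambda>_. {1..card V}))"
  proof
    fix s assume "s \<in> ?S"
    then obtain g where g: "bij_betw g V {1..card V}" "s = str_of g V E" by blast
    then have "restrict g V \<in> PiE V (\<lambda>_. {1..card V})"
      by (auto simp: bij_betw_def)
    then show "s \<in> (\<lambda>g. str_of g V E) ` (PiE V (\<lambda>_. {1..card V}))"
      using g r by (metis image_eqI)
  qed
  moreover have "finite (PiE V (\<lambda>_. {1..card V}))" using fin by (intro finite_PiE) auto
  ultimately have "finite ?S" by (meson finite_imageI finite_subset)
  moreover have "str_of f V E \<in> ?S" using bij by blast
  ultimately show ?thesis unfolding strength_def by (rule Min_le)
qed

lemma finite_Qv: "finite (Qv n)"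
  unfolding Qv_def using finite_len[of n "\<lambda>_. True"] by simp

lemma upper_bound:
  assumes "1 \<le> n"
  shows "str_of (fn n) (Qv n) (Qadj n) \<le> 2 ^ n + 1 + (\<Sum>j<n - 1. cc j)"
proof (rule str_of_le[OF finite_Qv])
  let ?a = "[] :: bool list" and ?b = "replicate (n - 1) False"
  have l: "length (?a @ True # ?b) = n" using assms by simp
  show "?a @ True # ?b \<in> Qv n" "?a @ False # ?b \<in> Qv n" using assms by (simp_all add: Qv_def)
  show "Qadj n (?a @ True # ?b) (?a @ False # ?b)" using adj_pair[of ?a ?b] l by simp
next
  fix u v assume u: "u \<in> Qv n" and v: "v \<in> Qv n" and adj: "Qadj n u v"
  obtain a b where ab: "(u = a @ True # b \<and> v = a @ False # b) \<or> (u = a @ False # b \<and> v = a @ True # b)"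
    using adj_decomp[OF _ _ adj] u v by (auto simp: Qv_def)
  let ?p = "a @ True # b" and ?q = "a @ False # b"
  have lp: "length ?p = n" using ab u v by (auto simp: Qv_def)
  have la: "length a + length b = n - 1" using lp by simp
  have es: "int (fn n ?p) + int (fn n ?q) = 2 ^ n + 1 + (if odd (weight ?p) then - G ?p ?q else G ?p ?q)"
    using edge_sum[of a b] by (simp only: lp)
  have gb: "- (\<Sum>j<n - 1. int (cc j)) \<le> G ?p ?q \<and> G ?p ?q \<le> 0"
    using G_bounds[of a b] la by simp
  have "int (fn n ?p) + int (fn n ?q) \<le> 2 ^ n + 1 + (\<Sum>j<n - 1. int (cc j))"
    using es gb by (cases "odd (weight ?p)") auto
  then have "int (fn n ?p + fn n ?q) \<le> int (2 ^ n + 1 + (\<Sum>j<n - 1. cc j))"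
    by (simp add: of_nat_sum)
  then have "fn n ?p + fn n ?q \<le> 2 ^ n + 1 + (\<Sum>j<n - 1. cc j)"
    by (simp only: of_nat_le_iff)
  then show "fn n u + fn n v \<le> 2 ^ n + 1 + (\<Sum>j<n - 1. cc j)" using ab by auto
qed

lemma lower_bound:
  assumes "2 \<le> m"
  shows "2 ^ m + 1 + (\<Sum>j<m - 1. cc j) \<le> str_of (fn m) (Qv m) (Qadj m)"
proof -
  define l where "l = m - 2"
  define c where "c = odd (l div 2)"
  let ?a = "c # alt0 l" and ?b = "[] :: bool list"
  let ?p = "?a @ True # ?b" and ?q = "?a @ False # ?b"
  have lp: "length ?p = m" using assms by (simp add: l_def)
  have wp: "odd (weight ?p)" by (simp add: c_def)
  have "G ?p ?q = G (alt0 l @ [True]) (alt0 l @ [False]) - int (cc l)"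
    using G_cons[of c "alt0 l" "[]"] by simp
  also have "\<dots> = - (\<Sum>j<Suc l. int (cc j))" by (simp add: G_alt)
  finally have g: "G ?p ?q = - (\<Sum>j<m - 1. int (cc j))"
    using assms by (simp add: l_def Suc_diff_Suc numeral_2_eq_2)
  have "int (fn m ?p) + int (fn m ?q) = 2 ^ m + 1 + (\<Sum>j<m - 1. int (cc j))"
    using edge_sum[of ?a ?b] by (simp only: lp wp g if_True) simp
  then have "int (fn m ?p + fn m ?q) = int (2 ^ m + 1 + (\<Sum>j<m - 1. cc j))"
    by (simp add: of_nat_sum)
  then have "fn m ?p + fn m ?q = 2 ^ m + 1 + (\<Sum>j<m - 1. cc j)"
    by (simp only: of_nat_eq_iff)
  moreover have "fn m ?p + fn m ?q \<le> str_of (fn m) (Qv m) (Qadj m)"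
    by (rule str_of_ge[OF finite_Qv]) (use lp adj_pair[of ?a ?b] in \<open>simp_all add: Qv_def\<close>)
  ultimately show ?thesis by simp
qed

lemma ceil_half: "nat \<lceil>real k / 2\<rceil> = k - k div 2"
proof (cases "even k")
  case True
  then obtain j where "k = 2 * j" by (rule evenE)
  then show ?thesis by simp
next
  case False
  then obtain j where k: "k = 2 * j + 1" by (rule oddE)
  have "\<lceil>real k / 2\<rceil> = int j + 1"
    by (rule ceiling_unique) (simp_all add: k field_simps)
  then show ?thesis using k by simp
qed

lemma cc_ceil: "k choose nat \<lceil>real k / 2\<rceil> = cc k"
  unfolding ceil_half by (rule binomial_symmetric[symmetric]) simp

theorem corollary2p9:
  fixes n :: nat
  assumes "n \<ge> 5"
  shows "strength (Qv n) (Qadj n)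
    \<le> str_of (fn (n - 2)) (Qv (n - 2)) (Qadj (n - 2)) + 3 * 2 ^ (n - 2)
       + ((n - 3) choose nat \<lceil>real (n - 3) / 2\<rceil>)
       + ((n - 2) choose nat \<lceil>real (n - 2) / 2\<rceil>)"
proof -
  have s1: "strength (Qv n) (Qadj n) \<le> str_of (fn n) (Qv n) (Qadj n)"
    by (rule strength_le[OF finite_Qv fn_bij])
  have s2: "str_of (fn n) (Qv n) (Qadj n) \<le> 2 ^ n + 1 + (\<Sum>j<n - 1. cc j)"
    using assms by (intro upper_bound) simp
  have s3: "2 ^ (n - 2) + 1 + (\<Sum>j<n - 2 - 1. cc j) \<le> str_of (fn (n - 2)) (Qv (n - 2)) (Qadj (n - 2))"
    using assms by (intro lower_bound) simp
  have e1: "n - 1 = Suc (Suc (n - 3))" and e2: "n - 2 - 1 = n - 3" and e3: "Suc (n - 3) = n - 2"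
    using assms by simp_all
  have sum: "(\<Sum>j<n - 1. cc j) = (\<Sum>j<n - 3. cc j) + cc (n - 3) + cc (n - 2)"
    unfolding e1 sum.lessThan_Suc by (simp only: e3)
  have nn: "n = (n - 2) + 2" using assms by simp
  have p: "(2::nat) ^ n = 4 * 2 ^ (n - 2)"
    by (subst nn) (simp only: power_add, simp)
  have s3': "2 ^ (n - 2) + 1 + (\<Sum>j<n - 3. cc j) \<le> str_of (fn (n - 2)) (Qv (n - 2)) (Qadj (n - 2))"
    using s3 by (simp only: e2)
  show ?thesis
    unfolding cc_ceil using s1 s2 s3' sum p by linarith
qed


end
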